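(* Let $\Sigma$ be a finite alphabet, $\mathcal F\subseteq\Sigma^{\Sigma^*}$ a base class and $T\in\mathbb N_+$. If $\Sigma=\{0,1\}$, then $\mathrm{VCdim}(\mathcal F^{\mathrm{e2e}(T)})\le6\,T\cdot\mathrm{VCdim}(\mathcal F)$. For non-binary finite $\Sigma$, $$\mathrm{Ndim}(\mathcal F^{\mathrm{e2e}(T)})\le9\,T\cdot\mathrm{Ndim}(\mathcal F)\log_2\!\left(\frac{2\,\mathrm{Ndim}(\mathcal F)\,|\Sigma|}{e\ln2}\right).$$
   Context: For $f:\Sigma^*\to\Sigma$, $\bar f(\mathbf x)$ is $\mathbf x$ with $f(\mathbf x)$ appended; $f^{\mathrm{CoT}(T)}=\bar f^{\circ T}$; $f^{\mathrm{e2e}(T)}(\mathbf x)$ is the last token of $f^{\mathrm{CoT}(T)}(\mathbf x)$; $\mathcal F^{\mathrm{e2e}(T)}=\{f^{\mathrm{e2e}(T)}:f\in\mathcal F\}$ (classes of functions on $\Sigma^*$). $\mathrm{VCdim}$ is the VC dimension. Natarajan dimension $\mathrm{Ndim}(\mathcal H)$: the largest size of a set $S$ for which there are $h_0,h_1$ with $h_0(\mathbf x)\ne h_1(\mathbf x)$ for all $\mathbf x\in S$ such that for every $U\subseteq S$ some $h\in\mathcal H$ agrees with $h_0$ on $U$ and with $h_1$ on $S\setminus U$. *)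

theory Defs
  imports Complex_Main "HOL-Library.Extended_Nat"
begin

definition extend :: "('s list \<Rightarrow> 's) \<Rightarrow> 's list \<Rightarrow> 's list" where
  "extend f x = x @ [f x]"

definition CoT :: "nat \<Rightarrow> ('s list \<Rightarrow> 's) \<Rightarrow> 's list \<Rightarrow> 's list" where
  "CoT T f = (extend f) ^^ T"

definition e2e :: "nat \<Rightarrow> ('s list \<Rightarrow> 's) \<Rightarrow> 's list \<Rightarrow> 's" where
  "e2e T f x = last (CoT T f x)"

definition e2e_class :: "nat \<Rightarrow> ('s list \<Rightarrow> 's) set \<Rightarrow> ('s list \<Rightarrow> 's) set" where
  "e2e_class T F = e2e T ` F"

definition shatters :: "('a \<Rightarrow> bool) set \<Rightarrow> 'a set \<Rightarrow> bool" where
  "shatters H S \<longleftrightarrow> (\<forall>U \<subseteq> S. \<exists>h \<in> H. \<forall>x \<in> S. h x = (x \<in> U))"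

definition VCdim :: "('a \<Rightarrow> bool) set \<Rightarrow> enat" where
  "VCdim H = Sup {enat (card S) | S. finite S \<and> shatters H S}"

definition N_shatters :: "('a \<Rightarrow> 'b) set \<Rightarrow> 'a set \<Rightarrow> bool" where
  "N_shatters H S \<longleftrightarrow> (\<exists>h0 h1. (\<forall>x \<in> S. h0 x \<noteq> h1 x) \<and>
      (\<forall>U \<subseteq> S. \<exists>h \<in> H. (\<forall>x \<in> U. h x = h0 x) \<and> (\<forall>x \<in> S - U. h x = h1 x)))"

definition Ndim :: "('a \<Rightarrow> 'b) set \<Rightarrow> enat" where
  "Ndim H = Sup {enat (card S) | S. finite S \<and> N_shatters H S}"

end

theory Submission
  imports Defs "HOL-Analysis.Analysis" "HOL-Library.FuncSet"
begin


lemma sum_binom_step: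
  "(\<Sum>i\<le>Suc e. (Suc n choose i) * K^i) = (\<Sum>i\<le>Suc e. (n choose i) * K^i) + K * (\<Sum>i\<le>e. (n choose i) * (K::nat)^i)"
proof (induction e)
  case 0 then show ?case by simp
next
  case (Suc e)
  have "(\<Sum>i\<le>Suc (Suc e). (Suc n choose i) * K^i) = (\<Sum>i\<le>Suc e. (Suc n choose i) * K^i) + (Suc n choose Suc (Suc e)) * K^(Suc (Suc e))"
    by simp
  also have "\<dots> = (\<Sum>i\<le>Suc (Suc e). (n choose i) * K^i) + K * (\<Sum>i\<le>Suc e. (n choose i) * (K::nat)^i)"
    using Suc by (simp add: algebra_simps)
  finally show ?case .
qed

lemma Nsh_mono: "N_shatters H S \<Longrightarrow> S' \<subseteq> S \<Longrightarrow> N_shatters H S'"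
  unfolding N_shatters_def
proof (elim exE conjE)
  fix h0 h1 assume d: "\<forall>x\<in>S. h0 x \<noteq> h1 x" and u: "\<forall>U\<subseteq>S. \<exists>h\<in>H. (\<forall>x\<in>U. h x = h0 x) \<and> (\<forall>x\<in>S - U. h x = h1 x)"
    and s: "S' \<subseteq> S"
  show "\<exists>h0 h1. (\<forall>x\<in>S'. h0 x \<noteq> h1 x) \<and> (\<forall>U\<subseteq>S'. \<exists>h\<in>H. (\<forall>x\<in>U. h x = h0 x) \<and> (\<forall>x\<in>S' - U. h x = h1 x))"
  proof (intro exI conjI allI impI)
    show "\<forall>x\<in>S'. h0 x \<noteq> h1 x" using d s by blast
    fix U assume "U \<subseteq> S'"
    then obtain h where "h \<in> H" "\<forall>x\<in>U. h x = h0 x" "\<forall>x\<in>S - U. h x = h1 x" using u s by (meson order_trans)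
    then show "\<exists>h\<in>H. (\<forall>x\<in>U. h x = h0 x) \<and> (\<forall>x\<in>S' - U. h x = h1 x)" using s by blast
  qed
qed

definition Hab :: "('a \<Rightarrow> 'b) set \<Rightarrow> 'a set \<Rightarrow> 'a \<Rightarrow> 'b \<Rightarrow> 'b \<Rightarrow> ('a \<Rightarrow> 'b) set" where
  "Hab H Q' x a b = {h\<in>H. h x = a \<and> (\<exists>h'\<in>H. h' x = b \<and> restrict h' Q' = restrict h Q')}"

lemma Hab_shatter:
  assumes "S \<subseteq> Q'" "x \<notin> Q'" "a \<noteq> b" "N_shatters (Hab H Q' x a b) S"
  shows "N_shatters H (insert x S)"
proof -
  obtain h0 h1 where d: "\<forall>y\<in>S. h0 y \<noteq> h1 y" and u: "\<forall>U\<subseteq>S. \<exists>h\<in>Hab H Q' x a b. (\<forall>y\<in>U. h y = h0 y) \<and> (\<forall>y\<in>S - U. h y = h1 y)"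
    using assms(4) unfolding N_shatters_def by blast
  have xS: "x \<notin> S" using assms by blast
  have 1: "\<forall>y\<in>insert x S. (h0(x := a)) y \<noteq> (h1(x := b)) y" using d xS assms(3) by auto
  have 2: "\<exists>h\<in>H. (\<forall>y\<in>U. h y = (h0(x := a)) y) \<and> (\<forall>y\<in>insert x S - U. h y = (h1(x := b)) y)"
    if U: "U \<subseteq> insert x S" for U
  proof -
    obtain h where h: "h \<in> Hab H Q' x a b" "\<forall>y\<in>U - {x}. h y = h0 y" "\<forall>y\<in>S - (U - {x}). h y = h1 y"
      using u U by (metis Diff_subset_conv insert_is_Un)
    from h(1) obtain h' where h': "h \<in> H" "h x = a" "h' \<in> H" "h' x = b" "restrict h' Q' = restrict h Q'"
      unfolding Hab_def by blast
    have eq: "\<forall>y\<in>S. h' y = h y" using h'(5) assms(1) by (metis restrict_apply' subsetD)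
    show ?thesis
    proof (cases "x \<in> U")
      case True
      show ?thesis using True h h' xS U by (intro bexI[of _ h]) auto
    next
      case False
      show ?thesis using False h h' xS U eq by (intro bexI[of _ h']) auto
    qed
  qed
  show ?thesis unfolding N_shatters_def using 1 2 by blast
qed

lemma finite_restr: "finite Q \<Longrightarrow> finite ((\<lambda>h. restrict h Q) ` (H :: ('a \<Rightarrow> 'b::finite) set))"
proof -
  assume "finite Q"
  then have "finite (Q \<rightarrow>\<^sub>E (UNIV::'b set))" by (intro finite_PiE) auto
  moreover have "(\<lambda>h. restrict h Q) ` H \<subseteq> Q \<rightarrow>\<^sub>E (UNIV::'b set)" by auto
  ultimately show ?thesis by (rule finite_subset[rotated])
qed

lemma count_step:
  fixes H :: "('a \<Rightarrow> 'b::finite) set"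
  assumes fin: "finite Q'" and xQ: "x \<notin> Q'"
  shows "card ((\<lambda>h. restrict h (insert x Q')) ` H) \<le> card ((\<lambda>h. restrict h Q') ` H)
     + (\<Sum>p\<in>{(a,b). a \<noteq> b}. card ((\<lambda>h. restrict h Q') ` Hab H Q' x (fst p) (snd p)))"
proof -
  define Q where "Q = insert x Q'"
  define R where "R = (\<lambda>h. restrict h Q) ` H"
  define R' where "R' = (\<lambda>h. restrict h Q') ` H"
  define P where "P = {(a::'b,b). a \<noteq> b}"
  define B where "B = (SIGMA p:P. (\<lambda>h. restrict h Q') ` Hab H Q' x (fst p) (snd p))"
  define c where "c g' = (SOME g. g \<in> R \<and> restrict g Q' = g')" for g'
  define \<phi> where "\<phi> g = (if g = c (restrict g Q') then Inl (restrict g Q') else Inr ((c (restrict g Q') x, g x), restrict g Q'))" for g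
  have QQ: "Q' \<subseteq> Q" unfolding Q_def by auto
  have rr: "restrict (restrict h Q) Q' = restrict h Q'" for h :: "'a \<Rightarrow> 'b"
    using QQ by (auto simp: restrict_def fun_eq_iff)
  have cR: "c (restrict g Q') \<in> R \<and> restrict (c (restrict g Q')) Q' = restrict g Q'" if "g \<in> R" for g
    unfolding c_def by (rule someI[of _ g]) (use that in auto)
  have ext_eq: "g1 = g2" if "g1 \<in> R" "g2 \<in> R" "restrict g1 Q' = restrict g2 Q'" "g1 x = g2 x" for g1 g2
  proof
    fix y
    from that(1,2) obtain h1 h2 where "g1 = restrict h1 Q" "g2 = restrict h2 Q" unfolding R_def by auto
    moreover have "y \<in> Q' \<Longrightarrow> g1 y = g2 y" using that(3) by (metis restrict_apply')
    ultimately show "g1 y = g2 y" using that(4) unfolding Q_def by (cases "y = x") auto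
  qed
  have inj: "inj_on \<phi> R"
  proof
    fix g1 g2 assume g: "g1 \<in> R" "g2 \<in> R" "\<phi> g1 = \<phi> g2"
    show "g1 = g2"
    proof (cases "g1 = c (restrict g1 Q')")
      case True
      then show ?thesis using g unfolding \<phi>_def by (auto split: if_splits)
    next
      case False
      then have "g2 \<noteq> c (restrict g2 Q')" "restrict g1 Q' = restrict g2 Q'" "g1 x = g2 x"
        using g unfolding \<phi>_def by (auto split: if_splits)
      then show ?thesis using ext_eq g by blast
    qed
  qed
  have into: "\<phi> ` R \<subseteq> R' <+> B"
  proof
    fix z assume "z \<in> \<phi> ` R"
    then obtain g where g: "g \<in> R" "z = \<phi> g" by auto
    then obtain h where h: "h \<in> H" "g = restrict h Q" unfolding R_def by auto
    show "z \<in> R' <+> B"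
    proof (cases "g = c (restrict g Q')")
      case True
      then have "z = Inl (restrict g Q')" using g unfolding \<phi>_def by simp
      moreover have "restrict g Q' \<in> R'" using h rr unfolding R'_def by auto
      ultimately show ?thesis by auto
    next
      case False
      obtain h'' where h'': "h'' \<in> H" "c (restrict g Q') = restrict h'' Q" using cR[OF g(1)] unfolding R_def by auto
      have r'': "restrict h'' Q' = restrict h Q'" using cR[OF g(1)] h'' h rr by metis
      have xQ: "x \<in> Q" unfolding Q_def by simp
      have ab: "h'' x \<noteq> h x"
      proof
        assume "h'' x = h x"
        then have "c (restrict g Q') = g" using ext_eq[of "c (restrict g Q')" g] cR[OF g(1)] g(1) h h'' xQ by simp
        then show False using False by simp
      qed
      have "h'' \<in> Hab H Q' x (h'' x) (h x)" unfolding Hab_def using h h'' r'' by auto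
      then have "((h'' x, h x), restrict g Q') \<in> B" unfolding B_def P_def using ab h rr r'' by (auto intro!: image_eqI[of _ _ h''])
      moreover have "z = Inr ((h'' x, h x), restrict g Q')" using g False h'' h xQ unfolding \<phi>_def by simp
      ultimately show ?thesis by auto
    qed
  qed
  have finR': "finite R'" unfolding R'_def by (rule finite_restr[OF fin])
  have finB: "finite B" unfolding B_def P_def
    by (intro finite_SigmaI finite_restr[OF fin]) auto
  have "card R \<le> card (R' <+> B)"
    by (rule card_inj_on_le[OF inj into]) (use finR' finB in auto)
  also have "\<dots> = card R' + card B" using finR' finB by (simp add: card_Plus)
  also have "card B = (\<Sum>p\<in>P. card ((\<lambda>h. restrict h Q') ` Hab H Q' x (fst p) (snd p)))"
    unfolding B_def by (rule card_SigmaI) (auto simp: P_def intro: finite_restr[OF fin])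
  finally show ?thesis unfolding R_def R'_def P_def Q_def .
qed

lemma natarajan_count:
  fixes H :: "('a \<Rightarrow> 'b::finite) set"
  assumes "finite Q" "\<And>S. S \<subseteq> Q \<Longrightarrow> N_shatters H S \<Longrightarrow> card S \<le> d"
  shows "card ((\<lambda>h. restrict h Q) ` H) \<le> (\<Sum>i\<le>d. (card Q choose i) * (card {(a::'b,b). a\<noteq>b})^i)"
  using assms
proof (induction Q arbitrary: H d rule: finite_induct)
  case empty
  have "(\<lambda>h. restrict h {}) ` H \<subseteq> {\<lambda>_. undefined}" by (auto simp: restrict_def)
  then have "card ((\<lambda>h. restrict h {}) ` H) \<le> card {\<lambda>_::'a. undefined::'b}" by (intro card_mono) auto
  then have "card ((\<lambda>h. restrict h {}) ` H) \<le> 1" by simp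
  also have "1 \<le> (\<Sum>i\<le>d. (card ({}::'a set) choose i) * (card {(a::'b,b). a\<noteq>b})^i)"
    by (simp add: sum.atMost_shift)
  finally show ?case .
next
  case (insert x Q')
  define K where "K = card {(a::'b,b). a\<noteq>b}"
  define P where "P = {(a::'b,b). a\<noteq>b}"
  define n where "n = card Q'"
  have cQ: "card (insert x Q') = Suc n" using insert n_def by simp
  have st: "card ((\<lambda>h. restrict h (insert x Q')) ` H) \<le> card ((\<lambda>h. restrict h Q') ` H)
     + (\<Sum>p\<in>P. card ((\<lambda>h. restrict h Q') ` Hab H Q' x (fst p) (snd p)))"
    unfolding P_def by (rule count_step) (use insert in auto)
  have ih1: "card ((\<lambda>h. restrict h Q') ` H) \<le> (\<Sum>i\<le>d. (n choose i) * K^i)"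
    unfolding n_def K_def by (rule insert.IH) (use insert.prems in auto)
  show ?case
  proof (cases d)
    case 0
    have "Hab H Q' x (fst p) (snd p) = {}" if "p \<in> P" for p
    proof (rule ccontr)
      assume "Hab H Q' x (fst p) (snd p) \<noteq> {}"
      then have "N_shatters (Hab H Q' x (fst p) (snd p)) {}" unfolding N_shatters_def by auto
      then have "N_shatters H (insert x {})" by (rule Hab_shatter[rotated 3]) (use that insert P_def in auto)
      then have "card {x} \<le> d" using insert.prems(1)[of "{x}"] by auto
      then show False using 0 by simp
    qed
    then have "(\<Sum>p\<in>P. card ((\<lambda>h. restrict h Q') ` Hab H Q' x (fst p) (snd p))) = 0" by simp
    then have "card ((\<lambda>h. restrict h (insert x Q')) ` H) \<le> 1" using st ih1 0 by simp
    moreover have "(\<Sum>i\<le>d. (card (insert x Q') choose i) * (card {(a::'b,b). a\<noteq>b})^i) = 1" using 0 by simp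
    ultimately show ?thesis by linarith
  next
    case (Suc e)
    have ih2: "card ((\<lambda>h. restrict h Q') ` Hab H Q' x (fst p) (snd p)) \<le> (\<Sum>i\<le>e. (n choose i) * K^i)" if "p \<in> P" for p
      unfolding n_def K_def
    proof (rule insert.IH)
      fix S assume S: "S \<subseteq> Q'" "N_shatters (Hab H Q' x (fst p) (snd p)) S"
      then have "N_shatters H (insert x S)" by (intro Hab_shatter[OF S(1)]) (use that insert P_def in auto)
      then have "card (insert x S) \<le> d" using insert.prems(1)[of "insert x S"] S by auto
      moreover have "card (insert x S) = Suc (card S)" using S(1) insert.hyps(1,2) by (metis card_insert_disjoint finite_subset subsetD)
      ultimately show "card S \<le> e" using Suc by simp
    qed
    have "(\<Sum>p\<in>P. card ((\<lambda>h. restrict h Q') ` Hab H Q' x (fst p) (snd p))) \<le> (\<Sum>p\<in>P. (\<Sum>i\<le>e. (n choose i) * K^i))"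
      by (rule sum_mono) (use ih2 in auto)
    also have "\<dots> = K * (\<Sum>i\<le>e. (n choose i) * K^i)" unfolding K_def P_def by simp
    finally have "card ((\<lambda>h. restrict h (insert x Q')) ` H) \<le> (\<Sum>i\<le>Suc e. (n choose i) * K^i) + K * (\<Sum>i\<le>e. (n choose i) * K^i)"
      using st ih1 Suc by simp
    also have "\<dots> = (\<Sum>i\<le>Suc e. (Suc n choose i) * K^i)" by (rule sum_binom_step[symmetric])
    finally show ?thesis unfolding cQ K_def Suc .
  qed
qed



lemma CoT_Suc: "CoT (Suc t) f s = extend f (CoT t f s)"
  unfolding CoT_def by simp

lemma CoT_shape: "\<exists>y. CoT t f s = s @ y \<and> length y = t"
proof (induction t)
  case 0 then show ?case by (simp add: CoT_def)
next
  case (Suc t)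
  then obtain y where "CoT t f s = s @ y" "length y = t" by blast
  then show ?case by (auto simp: CoT_Suc extend_def intro!: exI[of _ "y @ [f (s @ y)]"])
qed

lemma CoT_local: "(\<And>y. length y < t \<Longrightarrow> f (s @ y) = g (s @ y)) \<Longrightarrow> CoT t f s = CoT t g s"
proof (induction t)
  case 0 then show ?case by (simp add: CoT_def)
next
  case (Suc t)
  then have eq: "CoT t f s = CoT t g s" by simp
  obtain y where y: "CoT t f s = s @ y" "length y = t" using CoT_shape by blast
  have "f (s @ y) = g (s @ y)" using Suc.prems y by simp
  then show ?case using eq y by (simp add: CoT_Suc extend_def)
qed

definition Qs :: "nat \<Rightarrow> 's list set \<Rightarrow> 's list set" where
  "Qs T S = (\<lambda>(s,y). s @ y) ` (S \<times> {y. length y < T})"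

lemma e2e_local:
  assumes "restrict f (Qs T S) = restrict g (Qs T S)" "s \<in> S"
  shows "e2e T f s = e2e T g s"
proof -
  have "f (s @ y) = g (s @ y)" if "length y < T" for y
  proof -
    have "s @ y \<in> Qs T S" unfolding Qs_def using that assms(2) by force
    then show ?thesis using assms(1) by (metis restrict_apply')
  qed
  then show ?thesis unfolding e2e_def using CoT_local by metis
qed

lemma finite_short: "finite {y::('s::finite) list. length y < T}"
proof -
  have "{y::'s list. length y < T} \<subseteq> {y. set y \<subseteq> UNIV \<and> length y \<le> T}" by auto
  then show ?thesis using finite_lists_length_le[of "UNIV::'s set" T] finite_subset by auto
qed

lemma card_short: "card {y::('s::finite) list. length y < T} = (\<Sum>j<T. card (UNIV::'s set)^j)"
proof -
  have "{y::'s list. length y < T} = (\<Union>j<T. {y. set y \<subseteq> UNIV \<and> length y = j})" by auto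
  also have "card \<dots> = (\<Sum>j<T. card {y::'s list. set y \<subseteq> UNIV \<and> length y = j})"
    by (rule card_UN_disjoint) (use finite_lists_length_eq[OF finite_class.finite_UNIV] in auto)
  also have "\<dots> = (\<Sum>j<T. card (UNIV::'s set)^j)" by (simp only: card_lists_length_eq[OF finite_class.finite_UNIV])
  finally show ?thesis .
qed

lemma finite_Qs: "finite S \<Longrightarrow> finite (Qs T (S :: ('s::finite) list set))"
  unfolding Qs_def using finite_short by blast

lemma card_Qs: "finite S \<Longrightarrow> card (Qs T (S :: ('s::finite) list set)) \<le> card S * (\<Sum>j<T. card (UNIV::'s set)^j)"
proof -
  assume "finite S"
  have "card (Qs T S) \<le> card (S \<times> {y::'s list. length y < T})" unfolding Qs_def by (rule card_image_le) (use \<open>finite S\<close> finite_short in auto)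
  also have "\<dots> = card S * (\<Sum>j<T. card (UNIV::'s set)^j)" by (simp add: card_cartesian_product card_short)
  finally show ?thesis .
qed

lemma patterns:
  fixes F :: "('s::finite list \<Rightarrow> 's) set"
  assumes "finite S" "N_shatters (e2e_class T F) S"
  shows "2 ^ card S \<le> card ((\<lambda>h. restrict h (Qs T S)) ` F)"
proof -
  obtain h0 h1 where d: "\<forall>x\<in>S. h0 x \<noteq> h1 x" and u: "\<forall>U\<subseteq>S. \<exists>h\<in>e2e_class T F. (\<forall>x\<in>U. h x = h0 x) \<and> (\<forall>x\<in>S - U. h x = h1 x)"
    using assms(2) unfolding N_shatters_def by blast
  have "\<forall>U\<in>Pow S. \<exists>f\<in>F. (\<forall>x\<in>U. e2e T f x = h0 x) \<and> (\<forall>x\<in>S - U. e2e T f x = h1 x)"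
    using u unfolding e2e_class_def by blast
  then obtain fU where fU: "\<And>U. U \<in> Pow S \<Longrightarrow> fU U \<in> F \<and> (\<forall>x\<in>U. e2e T (fU U) x = h0 x) \<and> (\<forall>x\<in>S - U. e2e T (fU U) x = h1 x)"
    by metis
  have inj: "inj_on (\<lambda>U. restrict (fU U) (Qs T S)) (Pow S)"
  proof
    fix U V assume UV: "U \<in> Pow S" "V \<in> Pow S" "restrict (fU U) (Qs T S) = restrict (fU V) (Qs T S)"
    have e: "\<forall>x\<in>S. e2e T (fU U) x = e2e T (fU V) x" using e2e_local[OF UV(3)] by blast
    show "U = V"
    proof (rule ccontr)
      assume "U \<noteq> V"
      then obtain x where x: "x \<in> S" "(x \<in> U \<and> x \<notin> V) \<or> (x \<in> V \<and> x \<notin> U)" using UV by blast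
      have ex: "e2e T (fU U) x = e2e T (fU V) x" using e x(1) by blast
      have dx: "h0 x \<noteq> h1 x" using d x(1) by blast
      show False
      proof (cases "x \<in> U")
        case True
        then have "e2e T (fU U) x = h0 x" "e2e T (fU V) x = h1 x" using fU[OF UV(1)] fU[OF UV(2)] x by auto
        then show False using ex dx by simp
      next
        case False
        then have "e2e T (fU U) x = h1 x" "e2e T (fU V) x = h0 x" using fU[OF UV(1)] fU[OF UV(2)] x by auto
        then show False using ex dx by simp
      qed
    qed
  qed
  have "2 ^ card S = card (Pow S)" using assms(1) by (simp add: card_Pow)
  also have "\<dots> = card ((\<lambda>U. restrict (fU U) (Qs T S)) ` Pow S)" using card_image[OF inj] by simp
  also have "\<dots> \<le> card ((\<lambda>h. restrict h (Qs T S)) ` F)"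
    by (rule card_mono) (use finite_restr[OF finite_Qs[OF assms(1)]] fU in auto)
  finally show ?thesis .
qed

lemma shatters_N: "shatters H S \<Longrightarrow> N_shatters (H :: ('a \<Rightarrow> bool) set) S"
proof -
  assume a: "shatters H S"
  have 1: "\<forall>U\<subseteq>S. \<exists>h\<in>H. (\<forall>x\<in>U. h x = True) \<and> (\<forall>x\<in>S - U. h x = False)"
  proof (intro allI impI)
    fix U assume U: "U \<subseteq> S"
    obtain h where h: "h \<in> H" "\<forall>x\<in>S. h x = (x \<in> U)" using a U unfolding shatters_def by blast
    have "(\<forall>x\<in>U. h x = True) \<and> (\<forall>x\<in>S - U. h x = False)" using h(2) U by blast
    then show "\<exists>h\<in>H. (\<forall>x\<in>U. h x = True) \<and> (\<forall>x\<in>S - U. h x = False)" using h(1) by blast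
  qed
  have 2: "\<forall>x\<in>S. (\<lambda>_. True) x \<noteq> (\<lambda>_. False) x" by simp
  show ?thesis unfolding N_shatters_def
    apply (rule exI[of _ "\<lambda>_. True"])
    apply (rule exI[of _ "\<lambda>_. False"])
    using 1 2 by simp
qed

lemma N_shatters_bool: "N_shatters H S \<Longrightarrow> shatters (H :: ('a \<Rightarrow> bool) set) S"
proof -
  assume "N_shatters H S"
  then obtain h0 h1 where d: "\<forall>x\<in>S. h0 x \<noteq> h1 x" and u: "\<forall>U\<subseteq>S. \<exists>h\<in>H. (\<forall>x\<in>U. h x = h0 x) \<and> (\<forall>x\<in>S - U. h x = h1 x)"
    unfolding N_shatters_def by blast
  show ?thesis unfolding shatters_def
  proof (intro allI impI)
    fix U assume "U \<subseteq> S"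
    define V where "V = {x\<in>S. h0 x = (x \<in> U)}"
    have "V \<subseteq> S" unfolding V_def by blast
    then obtain h where h: "h \<in> H" "\<forall>x\<in>V. h x = h0 x" "\<forall>x\<in>S - V. h x = h1 x"
      using u by blast
    have "\<forall>x\<in>S. h x = (x \<in> U)"
    proof
      fix x assume x: "x \<in> S"
      show "h x = (x \<in> U)"
      proof (cases "x \<in> V")
        case True then show ?thesis using h(2) unfolding V_def by auto
      next
        case False
        then have "h x = h1 x" "h0 x \<noteq> (x \<in> U)" using h(3) x unfolding V_def by auto
        then show ?thesis using d x by (cases "h0 x"; cases "h1 x") auto
      qed
    qed
    then show "\<exists>h\<in>H. \<forall>x\<in>S. h x = (x \<in> U)" using h(1) by blast
  qed
qed



lemma choose_mono_top: "n \<le> N \<Longrightarrow> n choose k \<le> N choose k"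
proof (induction N rule: dec_induct)
  case base then show ?case by simp
next
  case (step N)
  have "N choose k \<le> Suc N choose k"
    by (cases k) simp_all
  then show ?case using step by simp
qed

lemma sum_choose_le: "(\<Sum>i\<le>d. n choose i) \<le> (n + d) choose d"
proof (induction d)
  case 0 then show ?case by simp
next
  case (Suc d)
  have "(\<Sum>i\<le>Suc d. n choose i) = (\<Sum>i\<le>d. n choose i) + (n choose Suc d)" by simp
  also have "\<dots> \<le> ((n + d) choose d) + ((n + d) choose Suc d)"
    using Suc choose_mono_top[of n "n+d" "Suc d"] by simp
  also have "\<dots> = (n + Suc d) choose Suc d" by simp
  finally show ?case .
qed

lemma sum_choose_K: "1 \<le> K \<Longrightarrow> (\<Sum>i\<le>d. (n choose i) * K^i) \<le> K^d * ((n + d) choose d)"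
proof -
  assume K: "1 \<le> (K::nat)"
  have "(\<Sum>i\<le>d. (n choose i) * K^i) \<le> (\<Sum>i\<le>d. (n choose i) * K^d)"
    by (rule sum_mono) (use K in \<open>auto intro: power_increasing\<close>)
  also have "\<dots> = K^d * (\<Sum>i\<le>d. n choose i)" by (simp add: sum_distrib_left mult.commute)
  also have "\<dots> \<le> K^d * ((n + d) choose d)" using sum_choose_le by (simp add: mult_left_mono)
  finally show ?thesis .
qed

lemma succ_pow_le: "(real d + 1) ^ d \<le> 3 * real d ^ d"
proof (cases "d = 0")
  case True then show ?thesis by simp
next
  case False
  then have dp: "real d > 0" by simp
  have "(1 + 1 / real d) ^ d \<le> exp (1 / real d) ^ d"
    by (rule power_mono) (use exp_ge_add_one_self in auto)
  also have "\<dots> = exp 1" using dp by (simp add: exp_of_nat_mult[symmetric])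
  also have "\<dots> \<le> 3" using e_less_272 by simp
  finally have "(1 + 1 / real d) ^ d \<le> 3" .
  moreover have "(real d + 1) ^ d = real d ^ d * (1 + 1 / real d) ^ d"
    using dp by (simp add: power_mult_distrib[symmetric] field_simps)
  ultimately show ?thesis using dp
    by (metis mult.commute mult_le_cancel_left_pos zero_less_power)
qed

lemma pow_le_fact: "d ^ d \<le> 3 ^ d * fact d"
proof (induction d)
  case 0 then show ?case by simp
next
  case (Suc d)
  have "real (Suc d ^ Suc d) = (real d + 1) * (real d + 1) ^ d" by (simp add: algebra_simps)
  also have "\<dots> \<le> (real d + 1) * (3 * real d ^ d)" by (rule mult_left_mono[OF succ_pow_le]) simp
  also have "\<dots> \<le> (real d + 1) * (3 * (3 ^ d * fact d))"
  proof -
    have "real (d ^ d) \<le> real (3 ^ d * fact d)" using Suc by (simp only: of_nat_le_iff)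
    then have ih: "real d ^ d \<le> 3 ^ d * fact d" by simp
    show ?thesis using ih by (intro mult_left_mono) simp_all
  qed
  also have "\<dots> = real (3 ^ Suc d * fact (Suc d))" by (simp add: algebra_simps)
  finally show ?case by (simp only: of_nat_le_iff)
qed

lemma choose_bound: "d ^ d * (N choose d) \<le> (3 * N) ^ d"
proof -
  have "d ^ d * (N choose d) \<le> 3 ^ d * fact d * (N choose d)" by (simp add: pow_le_fact)
  also have "\<dots> = 3 ^ d * ((N choose d) * fact d)" by simp
  also have "\<dots> \<le> 3 ^ d * N ^ d" using binomial_fact_pow by simp
  also have "\<dots> = (3 * N) ^ d" by (simp add: power_mult_distrib)
  finally show ?thesis .
qed

lemma bin_ineq: "1 \<le> T \<Longrightarrow> 6 * ((6 * T + 1) * (2 ^ T - 1) + 1) \<le> (2::nat) ^ (6 * T)"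
proof (induction T rule: dec_induct)
  case base then show ?case by simp
next
  case (step T)
  have "6 * ((6 * Suc T + 1) * (2 ^ Suc T - 1) + 1) \<le> 64 * (6 * ((6 * T + 1) * (2 ^ T - 1) + 1))"
  proof -
    have p: "2 ^ T \<ge> (1::nat)" by simp
    define q where "q = (2::nat) ^ T - 1"
    have e: "(2::nat) ^ T = q + 1" using p unfolding q_def by simp
    have q2: "(2::nat) ^ Suc T - 1 = 2 * q + 1" using e by simp
    have "(2::nat)^T \<ge> 2^1" by (rule power_increasing) (use step(1) in auto)
    then have q1: "q \<ge> 1" unfolding q_def by simp
    have "T * 36 \<le> T * (q * 2232)" using q1 by simp
    then have "T * 36 \<le> 336 + (q * 300 + T * (q * 2232))" by linarith
    then show ?thesis unfolding q2 q_def[symmetric] by (simp add: algebra_simps)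
  qed
  also have "\<dots> \<le> 64 * 2 ^ (6 * T)" using step by simp
  also have "\<dots> = 2 ^ (6 * Suc T)" by (simp add: power_add)
  finally show ?case .
qed

lemma geo_ineq: "3 \<le> k \<Longrightarrow> 2 * (\<Sum>j<T. k ^ j) + 1 \<le> (k::nat) ^ T"
proof (induction T)
  case 0 then show ?case by simp
next
  case (Suc T)
  then have "2 * (\<Sum>j<Suc T. k ^ j) + 1 \<le> k ^ T + 2 * k ^ T" by simp
  also have "\<dots> \<le> k * k ^ T" using Suc.prems by (simp add: mult_right_mono)
  finally show ?case by simp
qed

lemma powr_ineq: "(12::real) \<le> r \<Longrightarrow> 3 * r < 2 powr (2 * r / 3)"
proof -
  assume r: "12 \<le> r"
  define j where "j = nat \<lfloor>r / 3\<rfloor>"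
  have j4: "4 \<le> j" using r unfolding j_def by linarith
  have jr0: "real j \<le> r / 3" "r / 3 < real j + 1" using r unfolding j_def by linarith+
  have jr: "3 * real j \<le> r" "r < 3 * real j + 3" using jr0 by (simp_all add: field_simps)
  have nat_ineq: "9 * (j + 1) < 4 ^ j" if "4 \<le> j" for j :: nat
    using that
  proof (induction j rule: dec_induct)
    case base then show ?case by simp
  next
    case (step j)
    have "9 * (Suc j + 1) \<le> 4 * (9 * (j + 1))" by simp
    also have "\<dots> < 4 * 4 ^ j" using step by simp
    finally show ?case by simp
  qed
  have "3 * r < 9 * (real j + 1)" using jr by (simp add: algebra_simps)
  also have "\<dots> < 4 ^ j"
  proof -
    have "real (9 * (j + 1)) < real (4 ^ j)" using nat_ineq[OF j4] by (simp only: of_nat_less_iff)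
    then show ?thesis by simp
  qed
  also have "(4::real) ^ j = 2 powr (2 * real j)"
    by (simp add: powr_realpow[symmetric] powr_mult powr_powr[symmetric])
  also have "\<dots> \<le> 2 powr (2 * r / 3)" using jr by (intro powr_mono) (auto simp: field_simps)
  finally show ?thesis .
qed

lemma eln2: "exp 1 * ln 2 \<le> (2::real)"
proof -
  have "exp 1 * ln 2 \<le> (272/100) * (25/36::real)"
    using e_less_272 ln2_le_25_over_36 ln2_ge_two_thirds
    by (intro mult_mono) auto
  then show ?thesis by simp
qed



lemma Ndim_le: "Ndim H = enat d \<Longrightarrow> finite S \<Longrightarrow> N_shatters H S \<Longrightarrow> card S \<le> d"
proof -
  assume a: "Ndim H = enat d" "finite S" "N_shatters H S"
  have "enat (card S) \<le> Ndim H" unfolding Ndim_def by (rule Sup_upper) (use a in blast)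
  then show ?thesis using a(1) by simp
qed

lemma VC_le: "VCdim H = enat d \<Longrightarrow> finite S \<Longrightarrow> shatters H S \<Longrightarrow> card S \<le> d"
proof -
  assume a: "VCdim H = enat d" "finite S" "shatters H S"
  have "enat (card S) \<le> VCdim H" unfolding VCdim_def by (rule Sup_upper) (use a in blast)
  then show ?thesis using a(1) by simp
qed

lemma Ndim_bound: "(\<And>S. finite S \<Longrightarrow> N_shatters H S \<Longrightarrow> card S \<le> b) \<Longrightarrow> Ndim H \<le> enat b"
  unfolding Ndim_def by (rule Sup_least) auto

lemma VC_bound: "(\<And>S. finite S \<Longrightarrow> shatters H S \<Longrightarrow> card S \<le> b) \<Longrightarrow> VCdim H \<le> enat b"
  unfolding VCdim_def by (rule Sup_least) auto

lemma e2e_count: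
  fixes F :: "('s::finite list \<Rightarrow> 's) set"
  assumes hyp: "\<And>S. finite S \<Longrightarrow> N_shatters F S \<Longrightarrow> card S \<le> d"
    and S: "finite S" "N_shatters (e2e_class T F) S"
  shows "2 ^ card S \<le> (\<Sum>i\<le>d. (card (Qs T S) choose i) * (card {(a::'s,b). a\<noteq>b})^i)"
proof -
  have "2 ^ card S \<le> card ((\<lambda>h. restrict h (Qs T S)) ` F)" by (rule patterns[OF S])
  also have "\<dots> \<le> (\<Sum>i\<le>d. (card (Qs T S) choose i) * (card {(a::'s,b). a\<noteq>b})^i)"
    by (rule natarajan_count) (use finite_Qs[OF S(1)] hyp finite_subset in blast)+
  finally show ?thesis .
qed

lemma geo2: "(\<Sum>j<T. (2::nat) ^ j) + 1 = 2 ^ T"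
  by (induction T) auto

lemma card_bool_pairs: "card {(a::bool, b). a \<noteq> b} = 2"
proof -
  have "{(a::bool, b). a \<noteq> b} = {(True, False), (False, True)}" by auto
  then show ?thesis by simp
qed

lemma part1:
  fixes F :: "(bool list \<Rightarrow> bool) set"
  assumes T: "T \<ge> 1"
  shows "VCdim (e2e_class T F) \<le> enat (6 * T) * VCdim F"
proof (cases "VCdim F")
  case infinity
  then show ?thesis using T by simp
next
  case (enat d)
  have hyp: "card S \<le> d" if "finite S" "N_shatters F S" for S
    using VC_le[OF enat that(1) N_shatters_bool[OF that(2)]] .
  have main: "card S \<le> 6 * T * d" if S: "finite S" "shatters (e2e_class T F) S" for S
  proof (rule ccontr)
    assume "\<not> card S \<le> 6 * T * d"
    then obtain S' where S': "S' \<subseteq> S" "card S' = 6 * T * d + 1"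
      by (metis obtain_subset_with_card_n not_le Suc_eq_plus1 Suc_leI)
    define m where "m = 6 * T * d + 1"
    have fS': "finite S'" using S' S finite_subset by blast
    have sh: "N_shatters (e2e_class T F) S'" using Nsh_mono[OF shatters_N[OF S(2)] S'(1)] .
    define n where "n = card (Qs T S')"
    define q where "q = (2::nat) ^ T - 1"
    have qs: "q = (\<Sum>j<T. (2::nat) ^ j)" using geo2[of T] unfolding q_def by linarith
    have nq: "n \<le> m * q"
      using card_Qs[OF fS', of T] S'(2) unfolding n_def m_def qs by simp
    have "2 ^ m \<le> (\<Sum>i\<le>d. (n choose i) * 2^i)"
      using e2e_count[OF hyp fS' sh] S'(2) card_bool_pairs unfolding n_def m_def by simp
    also have "\<dots> \<le> 2 ^ d * ((n + d) choose d)" by (rule sum_choose_K) simp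
    finally have A: "2 ^ m \<le> 2 ^ d * ((n + d) choose d)" .
    show False
    proof (cases "d = 0")
      case True
      then show False using A unfolding m_def by simp
    next
      case False
      define M where "M = (6 * T + 1) * q + 1"
      have "n + d \<le> m * q + d" using nq by simp
      also have "m * q \<le> (6 * T * d + d) * q" unfolding m_def using False by (intro mult_right_mono) auto
      also have "(6 * T * d + d) * q + d = d * M" unfolding M_def by (simp add: algebra_simps)
      finally have nd: "n + d \<le> d * M" by simp
      have "d ^ d * ((n + d) choose d) \<le> (3 * (n + d)) ^ d" by (rule choose_bound)
      also have "\<dots> \<le> (3 * (d * M)) ^ d" using nd by (intro power_mono) auto
      also have "\<dots> = d ^ d * (3 * M) ^ d" by (simp add: power_mult_distrib)
      finally have "(n + d) choose d \<le> (3 * M) ^ d" using False by simp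
      then have "2 ^ m \<le> 2 ^ d * (3 * M) ^ d" using A by (meson le_trans mult_le_mono2)
      also have "\<dots> = (2 * (3 * M)) ^ d" by (rule power_mult_distrib[symmetric])
      also have "(2 * (3 * M)) ^ d = (6 * M) ^ d" by simp
      also have "\<dots> \<le> (2 ^ (6 * T)) ^ d" using bin_ineq[OF T] unfolding M_def q_def by (intro power_mono) auto
      also have "\<dots> = 2 ^ (6 * T * d)" by (simp add: power_mult)
      also have "\<dots> < 2 ^ m" unfolding m_def by simp
      finally show False by simp
    qed
  qed
  have "VCdim (e2e_class T F) \<le> enat (6 * T * d)" by (rule VC_bound) (use main in blast)
  then show ?thesis using enat by simp
qed



lemma log2_3: "4/3 \<le> log 2 (3::real)"
proof -
  have "(2 powr (4/3::real)) ^ 3 = 2 powr 4" by (subst powr_power) simp_all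
  also have "\<dots> = 16" by (simp add: powr_realpow[symmetric] powr_numeral)
  also have "\<dots> \<le> (3::real) ^ 3" by simp
  finally have c: "(2 powr (4/3::real)) ^ 3 \<le> 3 ^ 3" .
  have "2 powr (4/3::real) \<le> 3"
  proof (rule ccontr)
    assume "\<not> 2 powr (4/3::real) \<le> 3"
    then have "3 ^ 3 < (2 powr (4/3::real)) ^ 3" by (intro power_strict_mono) auto
    then show False using c by simp
  qed
  then show ?thesis by (subst le_log_iff) auto
qed

lemma real_contra:
  fixes r a :: real and T :: nat
  assumes T: "T \<ge> 1" and a: "a \<ge> 4/3" and r: "r > 9 * T * a"
    and ineq: "2 powr r \<le> 3 * r * 2 powr ((T + 2) * a)"
  shows False
proof -
  have Ta: "real T * a \<ge> a" using T a by (simp add: mult_le_cancel_right1)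
  have "(T + 2) * a \<le> 3 * T * a" using T a by (simp add: algebra_simps mult_right_mono)
  also have "\<dots> \<le> r / 3" using r by simp
  finally have A: "(T + 2) * a \<le> r / 3" .
  have r12: "12 \<le> r" using r Ta a by linarith
  have P: "2 powr ((T + 2) * a) \<le> 2 powr (r / 3)" using A by (intro powr_mono) auto
  have "2 powr (2 * r / 3) * 2 powr (r / 3) = 2 powr r" by (simp add: powr_add[symmetric])
  also have "\<dots> \<le> 3 * r * 2 powr ((T + 2) * a)" by (rule ineq)
  also have "\<dots> \<le> 3 * r * 2 powr (r / 3)" using P r12 by (intro mult_left_mono) auto
  finally have "2 powr (2 * r / 3) \<le> 3 * r" by simp
  then show False using powr_ineq[OF r12] by simp
qed


lemma part2:
  fixes F :: "('s::finite list \<Rightarrow> 's) set"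
  assumes T: "T \<ge> 1" and k2: "card (UNIV::'s set) \<noteq> 2" and Nd: "Ndim F = enat d"
  shows "\<exists>n. Ndim (e2e_class T F) = enat n \<and>
               real n \<le> 9 * real T * real d *
                 log 2 (2 * real d * real (card (UNIV :: 's set)) / (exp 1 * ln 2))"
proof -
  define k where "k = card (UNIV::'s set)"
  define B where "B = 9 * real T * real d * log 2 (2 * real d * real k / (exp 1 * ln 2))"
  have hyp: "card S \<le> d" if "finite S" "N_shatters F S" for S using Ndim_le[OF Nd that] .
  have k0: "k \<ge> 1" unfolding k_def by (simp add: Suc_leI)
  have key: "0 \<le> B \<and> (\<forall>S. finite S \<longrightarrow> N_shatters (e2e_class T F) S \<longrightarrow> real (card S) \<le> B)"
  proof (cases "k = 1")
    case True
    have allEq: "(a::'s) = b" for a b using True unfolding k_def by (metis card_1_singletonE singletonD UNIV_I)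
    have empty: "S = {}" if "N_shatters (H :: ('s list \<Rightarrow> 's) set) S" for H S
      using that allEq unfolding N_shatters_def by blast
    have "Ndim F \<le> enat 0" by (rule Ndim_bound) (use empty in auto)
    then have "d = 0" using Nd by (metis enat_ord_simps(1) le_zero_eq)
    then have "B = 0" unfolding B_def by simp
    then show ?thesis using empty by auto
  next
    case False
    then have k3: "k \<ge> 3" using k0 k2 unfolding k_def by linarith
    show ?thesis
    proof (cases "d = 0")
      case True
      then have B0: "B = 0" unfolding B_def by simp
      have "card S = 0" if "finite S" "N_shatters (e2e_class T F) S" for S
      proof -
        have "2 ^ card S \<le> (1::nat)" using e2e_count[OF hyp that] True by simp
        then have h1: "(2::nat) ^ card S \<le> 1" .
        show ?thesis
        proof (rule ccontr)
          assume "card S \<noteq> 0"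
          then have "(2::nat) ^ 1 \<le> 2 ^ card S" by (intro power_increasing) auto
          then show False using h1 by simp
        qed
      qed
      then show ?thesis using B0 by auto
    next
      case False
      define a where "a = log 2 (real k)"
      have eln_pos: "exp 1 * ln 2 > (0::real)" by simp
      have "real k \<le> 2 * real d * real k / (exp 1 * ln 2)"
      proof -
        have "real k * (exp 1 * ln 2) \<le> real k * 2" using eln2 by (intro mult_left_mono) auto
        also have "\<dots> \<le> 2 * real d * real k"
        proof -
          have "real k * 1 \<le> real k * real d" using False by (intro mult_left_mono) auto
          then show ?thesis by (simp add: mult.commute)
        qed
        finally show ?thesis using eln_pos by (simp add: field_simps)
      qed
      then have aL: "a \<le> log 2 (2 * real d * real k / (exp 1 * ln 2))"
        unfolding a_def using k3 by (intro log_mono) auto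
      have a43: "a \<ge> 4/3"
      proof -
        have "log 2 (3::real) \<le> a" unfolding a_def using k3 by (intro log_mono) auto
        then show ?thesis using log2_3 by linarith
      qed
      have Bge: "9 * real T * real d * a \<le> B" unfolding B_def using aL by (intro mult_left_mono) auto
      have "0 \<le> 9 * real T * real d * a" using a43 by simp
      then have B0: "0 \<le> B" using Bge by linarith
      have "real (card S) \<le> B" if S: "finite S" "N_shatters (e2e_class T F) S" for S
      proof (rule ccontr)
        assume "\<not> real (card S) \<le> B"
        then have mB: "real (card S) > 9 * real T * real d * a" using Bge by linarith
        define m where "m = card S"
        define n where "n = card (Qs T S)"
        define G where "G = (\<Sum>j<T. k ^ j)"
        have d1: "d \<ge> 1" using False by simp
        have "real d \<le> 9 * real T * real d * a"
        proof -
          have "1 * (4/3) \<le> real T * a" using T a43 by (intro mult_mono) auto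
          then have "1 \<le> 9 * real T * a" by simp
          then have "real d * 1 \<le> real d * (9 * real T * a)" by (intro mult_left_mono) auto
          then show ?thesis by (simp add: algebra_simps)
        qed
        then have dm: "d \<le> m" using mB unfolding m_def by simp
        have nG: "n \<le> m * G" using card_Qs[OF S(1), of T] unfolding n_def m_def G_def k_def by simp
        have GK: "2 * G + 1 \<le> k ^ T" unfolding G_def using geo_ineq[OF k3] .
        have nd: "n + d \<le> m * k ^ T"
        proof -
          have "n + d \<le> m * G + m" using nG dm by simp
          also have "\<dots> = m * (G + 1)" by simp
          also have "\<dots> \<le> m * k ^ T" using GK by (intro mult_left_mono) auto
          finally show ?thesis .
        qed
        have Kle: "card {(a::'s,b). a\<noteq>b} \<le> k ^ 2"
        proof -
          have "card {(a::'s,b). a\<noteq>b} \<le> card (UNIV :: ('s \<times> 's) set)" by (rule card_mono) auto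
          also have "\<dots> = k ^ 2" unfolding k_def by (simp add: UNIV_Times_UNIV[symmetric] card_cartesian_product power2_eq_square del: UNIV_Times_UNIV)
          finally show ?thesis .
        qed
        have "2 ^ m \<le> (\<Sum>i\<le>d. (n choose i) * (card {(a::'s,b). a\<noteq>b})^i)"
          using e2e_count[OF hyp S] unfolding m_def n_def .
        also have "\<dots> \<le> (\<Sum>i\<le>d. (n choose i) * (k ^ 2)^i)"
          by (intro sum_mono mult_left_mono power_mono Kle) auto
        also have "\<dots> \<le> (k ^ 2) ^ d * ((n + d) choose d)" by (rule sum_choose_K) (use k0 in simp)
        finally have A: "2 ^ m \<le> (k ^ 2) ^ d * ((n + d) choose d)" .
        have "d ^ d * ((n + d) choose d) \<le> (3 * (n + d)) ^ d" by (rule choose_bound)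
        also have "\<dots> \<le> (3 * (m * k ^ T)) ^ d" using nd by (intro power_mono) auto
        finally have Bd: "d ^ d * ((n + d) choose d) \<le> (3 * (m * k ^ T)) ^ d" .
        have "d ^ d * 2 ^ m \<le> (k ^ 2) ^ d * (d ^ d * ((n + d) choose d))" using A
          by (metis mult.left_commute mult_le_mono2)
        also have "\<dots> \<le> (k ^ 2) ^ d * (3 * (m * k ^ T)) ^ d" using Bd by (intro mult_left_mono) auto
        also have "\<dots> = (k ^ 2 * (3 * (m * k ^ T))) ^ d" by (rule power_mult_distrib[symmetric])
        also have "k ^ 2 * (3 * (m * k ^ T)) = 3 * m * k ^ (T + 2)" by (simp add: power_add ac_simps power2_eq_square)
        finally have N: "d ^ d * 2 ^ m \<le> (3 * m * k ^ (T + 2)) ^ d" .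
        define r where "r = real m / real d"
        have dpos: "real d > 0" using d1 by simp
        have "(real d * 2 powr r) ^ d = real d ^ d * (2 powr r) ^ d" by (simp add: power_mult_distrib)
        also have "(2 powr r) ^ d = 2 powr (real d * r)" by (subst powr_power) auto
        also have "real d * r = real m" unfolding r_def using dpos by simp
        also have "(2::real) powr real m = 2 ^ m" by (simp add: powr_realpow)
        finally have "(real d * 2 powr r) ^ d = real (d ^ d * 2 ^ m)" by simp
        also have "\<dots> \<le> real ((3 * m * k ^ (T + 2)) ^ d)" using N by (simp only: of_nat_le_iff)
        finally have "(real d * 2 powr r) ^ d \<le> (3 * real m * real k ^ (T + 2)) ^ d" by simp
        moreover obtain d' where d': "d = Suc d'" using d1 by (cases d) auto
        ultimately have "(real d * 2 powr r) ^ Suc d' \<le> (3 * real m * real k ^ (T + 2)) ^ Suc d'" by simp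
        then have "real d * 2 powr r \<le> 3 * real m * real k ^ (T + 2)"
          by (rule power_le_imp_le_base) simp
        then have I1: "2 powr r \<le> 3 * r * real k ^ (T + 2)" unfolding r_def using dpos
          by (simp add: field_simps)
        have "real k ^ (T + 2) = (2 powr a) ^ (T + 2)" unfolding a_def using k0 by simp
        also have "\<dots> = 2 powr ((T + 2) * a)" by (subst powr_power) auto
        finally have I2: "2 powr r \<le> 3 * r * 2 powr ((T + 2) * a)" using I1 by simp
        have "r > 9 * T * a" using mB dpos unfolding r_def m_def by (simp add: field_simps)
        then show False using real_contra[OF T a43 _ I2] by simp
      qed
      then show ?thesis using B0 by auto
    qed
  qed
  have "Ndim (e2e_class T F) \<le> enat (nat \<lfloor>B\<rfloor>)"
  proof (rule Ndim_bound)
    fix S assume "finite S" "N_shatters (e2e_class T F) S"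
    then have "real (card S) \<le> B" using key by blast
    then show "card S \<le> nat \<lfloor>B\<rfloor>" by (simp add: le_nat_floor)
  qed
  then obtain n where n: "Ndim (e2e_class T F) = enat n" "n \<le> nat \<lfloor>B\<rfloor>"
    by (metis enat_ile enat_ord_simps(1))
  have "real n \<le> real (nat \<lfloor>B\<rfloor>)" using n(2) by simp
  also have "\<dots> \<le> B" using key by linarith
  finally show ?thesis using n(1) unfolding B_def k_def by blast
qed


theorem theoremB1:
  fixes T :: nat
  assumes "T \<ge> 1"
  shows "(\<forall>F :: (bool list \<Rightarrow> bool) set.
            VCdim (e2e_class T F) \<le> enat (6 * T) * VCdim F)
       \<and> (\<forall>(F :: ('s::finite list \<Rightarrow> 's) set) d.
            card (UNIV :: 's set) \<noteq> 2 \<longrightarrow> Ndim F = enat d \<longrightarrow>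
            (\<exists>n. Ndim (e2e_class T F) = enat n \<and>
               real n \<le> 9 * real T * real d *
                 log 2 (2 * real d * real (card (UNIV :: 's set)) / (exp 1 * ln 2))))"
  using part1[OF assms] part2[OF assms] by blast

end
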